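(* Let $f:\mathbb{C}\to\mathbb{C}$ be an entire function of exponential type $\sigma>0$ such that $|f(x)|\le A/(1+x^2)$ for all $x\in\mathbb{R}$, for some $A>0$. Then for all $z=x+iy\in\mathbb{C}$ ($x,y\in\mathbb{R}$), $$|f(z)|\le\frac{Ae^{\sigma|y|}}{1+x^2}.$$
   Context: An entire function $f$ is of exponential type if there are constants $M,\tau>0$ with $|f(z)|\le Me^{\tau|z|}$ for all $z\in\mathbb{C}$; it is of exponential type $\sigma$ if $\sigma$ is the infimum of all such $\tau$. *)

theory Defs
  imports "HOL-Analysis.Analysis"
begin

definition exp_type_bounds :: "(complex \<Rightarrow> complex) \<Rightarrow> real set" where
  "exp_type_bounds f = {\<tau>. \<tau> > 0 \<and> (\<exists>M>0. \<forall>z. norm (f z) \<le> M * exp (\<tau> * norm z))}"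

definition exponential_type :: "(complex \<Rightarrow> complex) \<Rightarrow> bool" where
  "exponential_type f \<longleftrightarrow> f holomorphic_on UNIV \<and> exp_type_bounds f \<noteq> {}"

definition of_exponential_type :: "(complex \<Rightarrow> complex) \<Rightarrow> real \<Rightarrow> bool" where
  "of_exponential_type f \<sigma> \<longleftrightarrow> exponential_type f \<and> \<sigma> = Inf (exp_type_bounds f)"

end

theory Submission
  imports Defs "HOL-Complex_Analysis.Complex_Analysis" "HOL-Real_Asymp.Real_Asymp"
begin

lemma sqrt_alg:
  fixes v :: complex
  assumes "\<bar>Im v\<bar> \<le> Re v"
  shows "Re (csqrt v ^ 3) \<ge> Re (csqrt v) ^ 3 / 4" and "cmod v \<le> 5/4 * Re (csqrt v) ^ 2"
proof -
  define p where "p = Re (csqrt v)"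
  define q where "q = Im (csqrt v)"
  have p0: "p \<ge> 0" unfolding p_def by (rule Re_csqrt)
  have sq: "csqrt v ^ 2 = v" by simp
  have v: "v = Complex (p^2 - q^2) (2*p*q)"
    using sq unfolding p_def q_def
    by (metis (no_types, lifting) Im_power2 Re_power2 complex_surj power2_csqrt mult.assoc)
  have "\<bar>2*p*q\<bar> \<le> p^2 - q^2" using assms v by simp
  hence a: "2*p*\<bar>q\<bar> \<le> p^2 - \<bar>q\<bar>^2" using p0 by (simp add: abs_mult)
  have pa: "\<bar>q\<bar> \<le> p" using a p0
    by (smt (verit) abs_ge_zero mult_nonneg_nonneg power2_le_imp_le power2_abs)
  have p2: "2*\<bar>q\<bar> \<le> p"
  proof (rule ccontr)
    assume "\<not> ?thesis"
    hence "p - 2*\<bar>q\<bar> < 0" by simp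
    hence "p * (p - 2*\<bar>q\<bar>) \<le> 0" using p0 by (simp add: mult_nonneg_nonpos)
    hence "p^2 - 2*p*\<bar>q\<bar> \<le> 0" by (simp add: algebra_simps power2_eq_square)
    moreover have "\<bar>q\<bar> > 0" using \<open>\<not> 2*\<bar>q\<bar> \<le> p\<close> p0 by auto
    ultimately show False using a by (smt (verit) zero_less_power)
  qed
  have q2: "q^2 \<le> p^2/4"
  proof -
    have "(2*\<bar>q\<bar>)^2 \<le> p^2" using p2 by (intro power_mono) auto
    thus ?thesis by (simp add: power_mult_distrib)
  qed
  have "Re (csqrt v ^ 3) = p^3 - 3*p*q^2"
    unfolding p_def q_def by (simp add: numeral_3_eq_3 power2_eq_square algebra_simps)
  also have "\<dots> \<ge> p^3 - 3*p*(p^2/4)" using q2 p0 by (intro diff_left_mono mult_left_mono) auto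
  finally show "Re (csqrt v ^ 3) \<ge> Re (csqrt v) ^ 3 / 4"
    unfolding p_def[symmetric] by (simp add: power3_eq_cube power2_eq_square)
  have "cmod v = cmod (csqrt v) ^ 2" by (metis norm_power sq)
  also have "\<dots> = p^2 + q^2" unfolding p_def q_def by (rule cmod_power2)
  also have "\<dots> \<le> 5/4 * p^2" using q2 by simp
  finally show "cmod v \<le> 5/4 * Re (csqrt v) ^ 2" unfolding p_def .
qed

lemma le_from_right:
  fixes g :: "real \<Rightarrow> real"
  assumes "\<And>e. e > c \<Longrightarrow> a \<le> g e" and "(g \<longlongrightarrow> L) (at_right c)"
  shows "a \<le> L"
proof (rule tendsto_lowerbound[OF assms(2)])
  show "\<forall>\<^sub>F x in at_right c. a \<le> g x"
    using eventually_at_right_less[of c] by (rule eventually_mono) (rule assms(1))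
qed simp

lemma box_facts:
  fixes a b c d :: real
  defines "S \<equiv> {\<xi>::complex. a < Re \<xi> \<and> Re \<xi> < b \<and> c < Im \<xi> \<and> Im \<xi> < d}"
  shows "open S" "bounded S" "interior S = S"
    "\<And>\<xi>. \<xi> \<in> closure S \<Longrightarrow> a \<le> Re \<xi> \<and> Re \<xi> \<le> b \<and> c \<le> Im \<xi> \<and> Im \<xi> \<le> d"
    "\<And>\<xi>. \<xi> \<in> frontier S \<Longrightarrow> Re \<xi> = a \<or> Re \<xi> = b \<or> Im \<xi> = c \<or> Im \<xi> = d"
proof -
  show o: "open S" unfolding S_def
    by (intro open_Collect_conj open_Collect_less continuous_intros)
  show "interior S = S" using o by (rule interior_open)
  have "S \<subseteq> cball 0 (\<bar>a\<bar> + \<bar>b\<bar> + \<bar>c\<bar> + \<bar>d\<bar>)"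
  proof
    fix \<xi> assume "\<xi> \<in> S"
    hence "\<bar>Re \<xi>\<bar> \<le> \<bar>a\<bar> + \<bar>b\<bar>" "\<bar>Im \<xi>\<bar> \<le> \<bar>c\<bar> + \<bar>d\<bar>" unfolding S_def by auto
    thus "\<xi> \<in> cball 0 (\<bar>a\<bar> + \<bar>b\<bar> + \<bar>c\<bar> + \<bar>d\<bar>)"
      using cmod_le[of \<xi>] by auto
  qed
  thus "bounded S" using bounded_cball bounded_subset by blast
  have cl: "closure S \<subseteq> {\<xi>::complex. a \<le> Re \<xi> \<and> Re \<xi> \<le> b \<and> c \<le> Im \<xi> \<and> Im \<xi> \<le> d}"
    by (rule closure_minimal) (auto simp: S_def intro!: closed_Collect_conj closed_Collect_le continuous_intros)
  thus cl': "\<And>\<xi>. \<xi> \<in> closure S \<Longrightarrow> a \<le> Re \<xi> \<and> Re \<xi> \<le> b \<and> c \<le> Im \<xi> \<and> Im \<xi> \<le> d" by blast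
  fix \<xi> assume "\<xi> \<in> frontier S"
  hence "\<xi> \<in> closure S" "\<xi> \<notin> S" using o by (auto simp: frontier_def interior_open)
  thus "Re \<xi> = a \<or> Re \<xi> = b \<or> Im \<xi> = c \<or> Im \<xi> = d" using cl'[of \<xi>] unfolding S_def by auto
qed


lemma quadrant_PL:
  fixes h :: "complex \<Rightarrow> complex"
  assumes hol: "h holomorphic_on UNIV" and K: "K > 0" and M: "M > 0" and tau: "\<tau> \<ge> 0"
   and grow: "\<And>z. norm (h z) \<le> M * exp (\<tau> * norm z)"
   and re: "\<And>x. x \<ge> 0 \<Longrightarrow> norm (h (of_real x)) \<le> K"
   and im: "\<And>y. y \<ge> 0 \<Longrightarrow> norm (h (\<i> * of_real y)) \<le> K"
   and z: "Re z \<ge> 0" "Im z \<ge> 0"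
  shows "norm (h z) \<le> K"
proof (cases "Re z = 0 \<or> Im z = 0")
  case True
  then show ?thesis
  proof
    assume "Re z = 0"
    hence "z = \<i> * of_real (Im z)" by (simp add: complex_eq_iff)
    thus ?thesis using im[of "Im z"] z by simp
  next
    assume "Im z = 0"
    hence "z = of_real (Re z)" by (simp add: complex_eq_iff)
    thus ?thesis using re[of "Re z"] z by simp
  qed
next
  case False
  hence zpos: "Re z > 0" "Im z > 0" using z by auto
  define w where "w \<xi> = (1 - \<i>) * \<xi> + 1" for \<xi>
  define U where "U = {\<xi>. 0 < Re (w \<xi>)}"
  have wRe: "Re (w \<xi>) = Re \<xi> + Im \<xi> + 1" and wIm: "Im (w \<xi>) = Im \<xi> - Re \<xi>" for \<xi>
    by (simp_all add: w_def)
  have Uopen: "open U" unfolding U_def wRe by (intro open_Collect_less continuous_intros)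
  have wU: "w \<xi> \<notin> \<real>\<^sub>\<le>\<^sub>0" if "\<xi> \<in> U" for \<xi>
    using that unfolding U_def by (auto simp: complex_nonpos_Reals_iff)
  have keyQ: "Re (csqrt (w \<xi>) ^ 3) \<ge> Re (csqrt (w \<xi>)) ^ 3 / 4"
     "cmod (w \<xi>) \<le> 5/4 * Re (csqrt (w \<xi>)) ^ 2"
    if "Re \<xi> \<ge> 0" "Im \<xi> \<ge> 0" for \<xi>
  proof -
    have "\<bar>Im (w \<xi>)\<bar> \<le> Re (w \<xi>)" unfolding wRe wIm using that by auto
    from sqrt_alg[OF this] show "Re (csqrt (w \<xi>) ^ 3) \<ge> Re (csqrt (w \<xi>)) ^ 3 / 4"
     "cmod (w \<xi>) \<le> 5/4 * Re (csqrt (w \<xi>)) ^ 2" by auto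
  qed
  have wnorm: "cmod \<xi> \<le> cmod (w \<xi>) + 1" "cmod \<xi> - 1 \<le> cmod (w \<xi>)" for \<xi>
  proof -
    have n: "cmod ((1 - \<i>) * \<xi>) = sqrt 2 * cmod \<xi>"
    proof -
      have "cmod (1 - \<i>) = sqrt 2" by (simp add: cmod_def)
      thus ?thesis by (simp add: norm_mult)
    qed
    have "sqrt 2 \<ge> 1" by simp
    hence "cmod \<xi> \<le> cmod ((1 - \<i>) * \<xi>)" unfolding n
      using mult_right_mono[OF \<open>sqrt 2 \<ge> 1\<close> norm_ge_zero[of \<xi>]] by simp
    moreover have "cmod ((1 - \<i>) * \<xi>) \<le> cmod (w \<xi>) + 1"
      unfolding w_def by (metis add_diff_cancel norm_triangle_ineq4 norm_one)
    moreover have "cmod (w \<xi>) \<le> cmod ((1 - \<i>) * \<xi>) + 1"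
      unfolding w_def by (metis norm_triangle_ineq norm_one)
    ultimately show "cmod \<xi> \<le> cmod (w \<xi>) + 1" "cmod \<xi> - 1 \<le> cmod (w \<xi>)" by auto
  qed
  define c where "c = Re (csqrt (w z) ^ 3)"
  have main: "norm (h z) \<le> K * exp (e * c)" if e: "e > 0" for e
  proof -
    define m where "m \<xi> = exp (- (of_real e) * (csqrt (w \<xi>))^3)" for \<xi>
    have normm: "norm (m \<xi>) = exp (- e * Re (csqrt (w \<xi>) ^ 3))" for \<xi>
      unfolding m_def norm_exp_eq_Re by simp
    have mle: "norm (m \<xi>) \<le> exp (- e * Re (csqrt (w \<xi>)) ^ 3 / 4)"
      if "Re \<xi> \<ge> 0" "Im \<xi> \<ge> 0" for \<xi>
      unfolding normm using keyQ(1)[OF that] e by simp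
    have m1: "norm (m \<xi>) \<le> 1" if "Re \<xi> \<ge> 0" "Im \<xi> \<ge> 0" for \<xi>
    proof -
      have "0 \<le> Re (csqrt (w \<xi>)) ^ 3" using Re_csqrt by simp
      hence "exp (- e * Re (csqrt (w \<xi>)) ^ 3 / 4) \<le> 1" using e by (simp add: mult_nonneg_nonneg)
      thus ?thesis using mle[OF that] by linarith
    qed
    have lim: "((\<lambda>p. M * exp (\<tau> * (5/4*p^2+1) - e * p^3/4)) \<longlongrightarrow> 0) at_top"
      using e by real_asymp
    hence "\<forall>\<^sub>F p in at_top. M * exp (\<tau> * (5/4*p^2+1) - e * p^3/4) < K"
      using K by (simp add: order_tendstoD(2))
    then obtain P0 where P0: "\<And>p. p \<ge> P0 \<Longrightarrow> M * exp (\<tau> * (5/4*p^2+1) - e * p^3/4) < K"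
      by (auto simp: eventually_at_top_linorder)
    define P where "P = max P0 0"
    have P: "\<And>p. p \<ge> P \<Longrightarrow> M * exp (\<tau> * (5/4*p^2+1) - e * p^3/4) < K" "P \<ge> 0"
      using P0 unfolding P_def by auto
    define R where "R = Re z + Im z + 5/4 * P^2 + 2"
    have P2: "0 \<le> 5/4*P^2" by simp
    have R: "Re z < R" "Im z < R" "R \<ge> 5/4 * P^2 + 2" unfolding R_def using zpos P2 by linarith+
    define S where "S = {\<xi>::complex. 0 < Re \<xi> \<and> Re \<xi> < R \<and> 0 < Im \<xi> \<and> Im \<xi> < R}"
    note bf = box_facts[where a=0 and b=R and c=0 and d=R, folded S_def]
    have hm: "(\<lambda>\<xi>. h \<xi> * m \<xi>) holomorphic_on U"
      unfolding m_def
      by (intro holomorphic_intros holomorphic_on_subset[OF hol] wU) (auto simp: w_def intro!: holomorphic_intros)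
    have clU: "closure S \<subseteq> U"
    proof
      fix \<xi> assume "\<xi> \<in> closure S"
      from bf(4)[OF this] show "\<xi> \<in> U" by (simp add: U_def wRe)
    qed
    have far: "norm (h \<xi> * m \<xi>) \<le> K" if xi: "Re \<xi> \<ge> 0" "Im \<xi> \<ge> 0" "R \<le> cmod \<xi>" for \<xi>
    proof -
      define p where "p = Re (csqrt (w \<xi>))"
      have p0: "p \<ge> 0" unfolding p_def by (rule Re_csqrt)
      have "P^2 \<le> 4/5 * (cmod \<xi> - 1)" using R xi by simp
      also have "\<dots> \<le> 4/5 * cmod (w \<xi>)" using wnorm(2)[of \<xi>] by simp
      also have "\<dots> \<le> p^2" using keyQ(2)[OF xi(1,2)] unfolding p_def by simp
      finally have "P \<le> p" using p0 by (rule power2_le_imp_le)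
      hence lt: "M * exp (\<tau> * (5/4*p^2+1) - e * p^3/4) < K" by (rule P)
      have "cmod \<xi> \<le> 5/4*p^2+1" using wnorm(1)[of \<xi>] keyQ(2)[OF xi(1,2)] unfolding p_def by simp
      hence "exp (\<tau> * cmod \<xi>) \<le> exp (\<tau> * (5/4*p^2+1))" using tau by (simp add: mult_left_mono)
      hence "norm (h \<xi>) \<le> M * exp (\<tau> * (5/4*p^2+1))" using grow[of \<xi>] M
        by (meson mult_left_mono less_imp_le order_trans)
      moreover have "norm (m \<xi>) \<le> exp (- e * p ^ 3 / 4)" using mle[OF xi(1,2)] unfolding p_def .
      ultimately have "norm (h \<xi>) * norm (m \<xi>) \<le> M * exp (\<tau> * (5/4*p^2+1)) * exp (- e * p ^ 3 / 4)"
        using M by (intro mult_mono) auto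
      also have "\<dots> = M * exp (\<tau> * (5/4*p^2+1) - e * p^3/4)" unfolding mult.assoc exp_add[symmetric] by (simp add: algebra_simps)
      finally show ?thesis using lt by (simp add: norm_mult)
    qed
    have "norm (h z * m z) \<le> K"
    proof (rule maximum_modulus_frontier[where S = S and f = "\<lambda>\<xi>. h \<xi> * m \<xi>" and \<xi> = z])
      show "(\<lambda>\<xi>. h \<xi> * m \<xi>) holomorphic_on interior S"
      proof -
        have "S \<subseteq> U" using clU closure_subset by blast
        thus ?thesis using holomorphic_on_subset[OF hm] bf(3) by simp
      qed
      show "continuous_on (closure S) (\<lambda>\<xi>. h \<xi> * m \<xi>)"
        using holomorphic_on_imp_continuous_on[OF hm] clU continuous_on_subset by blast
      show "bounded S" by (rule bf(2))
      show "z \<in> S" unfolding S_def using zpos R by auto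
    next
      fix \<xi> assume fr: "\<xi> \<in> frontier S"
      have cl: "0 \<le> Re \<xi>" "Re \<xi> \<le> R" "0 \<le> Im \<xi>" "Im \<xi> \<le> R"
        using bf(4)[of \<xi>] fr frontier_closures[of S] by auto
      consider "Re \<xi> = 0" | "Im \<xi> = 0" | "Re \<xi> = R" | "Im \<xi> = R" using bf(5)[OF fr] by blast
      thus "norm (h \<xi> * m \<xi>) \<le> K"
      proof cases
        case 1
        hence "\<xi> = \<i> * of_real (Im \<xi>)" by (simp add: complex_eq_iff)
        hence "norm (h \<xi>) \<le> K" using im[of "Im \<xi>"] cl by simp
        thus ?thesis using mult_mono[OF _ m1[of \<xi>]] cl K by (simp add: norm_mult)
      next
        case 2
        hence "\<xi> = of_real (Re \<xi>)" by (simp add: complex_eq_iff)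
        hence "norm (h \<xi>) \<le> K" using re[of "Re \<xi>"] cl by simp
        thus ?thesis using mult_mono[OF _ m1[of \<xi>]] cl K by (simp add: norm_mult)
      next
        case 3 
        hence "R \<le> cmod \<xi>" using abs_Re_le_cmod[of \<xi>] cl by auto
        thus ?thesis using far cl by blast
      next
        case 4 
        hence "R \<le> cmod \<xi>" using abs_Im_le_cmod[of \<xi>] cl by auto
        thus ?thesis using far cl by blast
      qed
    qed
    hence "norm (h z) * exp (- e * c) \<le> K" unfolding c_def by (simp add: norm_mult normm)
    hence "norm (h z) \<le> K / exp (- e * c)" by (simp add: field_simps)
    thus ?thesis by (simp add: exp_minus field_simps)
  qed
  have "((\<lambda>e. K * exp (e * c)) \<longlongrightarrow> K * exp (0 * c)) (at_right 0)"
    by (intro tendsto_intros)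
  hence "((\<lambda>e. K * exp (e * c)) \<longlongrightarrow> K) (at_right 0)" by simp
  with main show ?thesis by (rule le_from_right[where c = 0])
qed


lemma halfplane_bdd:
  fixes h :: "complex \<Rightarrow> complex"
  assumes hol: "h holomorphic_on UNIV" and A: "A > 0" and K: "K > 0"
   and bdd: "\<And>z. Im z \<ge> 0 \<Longrightarrow> norm (h z) \<le> K"
   and re: "\<And>x. norm (h (of_real x)) \<le> A"
   and z: "Im z \<ge> 0"
  shows "norm (h z) \<le> A"
proof (cases "Im z = 0")
  case True
  hence "z = of_real (Re z)" by (simp add: complex_eq_iff)
  thus ?thesis using re[of "Re z"] by simp
next
  case False
  hence zpos: "Im z > 0" using z by auto
  have main: "norm (h z) \<le> A * cmod (1 - \<i> * of_real e * z)" if e: "e > 0" for e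
  proof -
    define d where "d \<xi> = 1 - \<i> * of_real e * \<xi>" for \<xi>
    define U where "U = {\<xi>. 0 < 1 + e * Im \<xi>}"
    have dRe: "Re (d \<xi>) = 1 + e * Im \<xi>" and dIm: "Im (d \<xi>) = - e * Re \<xi>" for \<xi>
      by (simp_all add: d_def)
    have Uopen: "open U" unfolding U_def by (intro open_Collect_less continuous_intros)
    have dnz: "d \<xi> \<noteq> 0" if "\<xi> \<in> U" for \<xi>
      using that dRe[of \<xi>] unfolding U_def by auto
    have d1: "cmod (d \<xi>) \<ge> 1" if "Im \<xi> \<ge> 0" for \<xi>
    proof -
      have "1 \<le> \<bar>Re (d \<xi>)\<bar>" unfolding dRe using that e by simp
      thus ?thesis using abs_Re_le_cmod[of "d \<xi>"] by linarith
    qed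
    have d2: "cmod (d \<xi>) \<ge> e * cmod \<xi>" if "Im \<xi> \<ge> 0" for \<xi>
    proof -
      have "(e * cmod \<xi>)^2 = (e * Re \<xi>)^2 + (e * Im \<xi>)^2"
        by (simp add: power_mult_distrib cmod_power2 algebra_simps)
      also have "\<dots> \<le> (Re (d \<xi>))^2 + (Im (d \<xi>))^2"
      proof -
        have "(e * Im \<xi>)^2 \<le> (1 + e*Im \<xi>)^2" by (rule power_mono) (use that e in auto)
        thus ?thesis unfolding dRe dIm by simp
      qed
      also have "\<dots> = (cmod (d \<xi>))^2" by (simp add: cmod_power2)
      finally show ?thesis by (rule power2_le_imp_le) simp
    qed
    define R where "R = \<bar>Re z\<bar> + Im z + K / (e * A) + 1"
    have KA: "K / (e * A) \<ge> 0" using K A e by simp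
    have R: "-R < Re z" "Re z < R" "Im z < R" "K \<le> e * A * R" "R > 0"
    proof -
      show "-R < Re z" "Re z < R" "Im z < R" "R > 0" unfolding R_def using zpos KA by linarith+
      have "K / (e * A) \<le> R" unfolding R_def using zpos by linarith
      thus "K \<le> e * A * R" using e A by (simp add: field_simps)
    qed
    define S where "S = {\<xi>::complex. -R < Re \<xi> \<and> Re \<xi> < R \<and> 0 < Im \<xi> \<and> Im \<xi> < R}"
    note bf = box_facts[where a="-R" and b=R and c=0 and d=R, folded S_def]
    have hm: "(\<lambda>\<xi>. h \<xi> / d \<xi>) holomorphic_on U"
      by (intro holomorphic_intros holomorphic_on_subset[OF hol] dnz) (auto simp: d_def intro!: holomorphic_intros)
    have clU: "closure S \<subseteq> U"
    proof
      fix \<xi> assume "\<xi> \<in> closure S"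
      from bf(4)[OF this] have "0 \<le> e * Im \<xi>" using e by simp
      thus "\<xi> \<in> U" by (simp add: U_def)
    qed
    have "norm (h z / d z) \<le> A"
    proof (rule maximum_modulus_frontier[where S = S and f = "\<lambda>\<xi>. h \<xi> / d \<xi>" and \<xi> = z])
      show "(\<lambda>\<xi>. h \<xi> / d \<xi>) holomorphic_on interior S"
      proof -
        have "S \<subseteq> U" using clU closure_subset by blast
        thus ?thesis using holomorphic_on_subset[OF hm] bf(3) by simp
      qed
      show "continuous_on (closure S) (\<lambda>\<xi>. h \<xi> / d \<xi>)"
        using holomorphic_on_imp_continuous_on[OF hm] clU continuous_on_subset by blast
      show "bounded S" by (rule bf(2))
      show "z \<in> S" unfolding S_def using zpos R by auto
    next
      fix \<xi> assume fr: "\<xi> \<in> frontier S"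
      have cl: "-R \<le> Re \<xi>" "Re \<xi> \<le> R" "0 \<le> Im \<xi>" "Im \<xi> \<le> R"
        using bf(4)[of \<xi>] fr frontier_closures[of S] by auto
      have dpos: "cmod (d \<xi>) > 0" using d1[OF cl(3)] by linarith
      consider "Im \<xi> = 0" | "R \<le> cmod \<xi>"
        using bf(5)[OF fr] abs_Re_le_cmod[of \<xi>] abs_Im_le_cmod[of \<xi>] cl by force
      thus "norm (h \<xi> / d \<xi>) \<le> A"
      proof cases
        case 1
        hence "\<xi> = of_real (Re \<xi>)" by (simp add: complex_eq_iff)
        hence "norm (h \<xi>) \<le> A" using re[of "Re \<xi>"] by simp
        also have "\<dots> \<le> A * cmod (d \<xi>)" using d1[OF cl(3)] A by simp
        finally show ?thesis using dpos by (simp add: norm_divide field_simps)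
      next
        case 2
        have "norm (h \<xi>) \<le> K" using bdd cl by simp
        also have "\<dots> \<le> e * A * R" by (rule R)
        also have "\<dots> \<le> A * (e * cmod \<xi>)" using 2 e A by (simp add: algebra_simps)
        also have "\<dots> \<le> A * cmod (d \<xi>)" using d2[OF cl(3)] A by simp
        finally show ?thesis using dpos by (simp add: norm_divide field_simps)
      qed
    qed
    moreover have "cmod (d z) > 0" using d1[OF z] by linarith
    ultimately show ?thesis by (simp add: d_def norm_divide field_simps)
  qed
  have "((\<lambda>e. A * cmod (1 - \<i> * of_real e * z)) \<longlongrightarrow> A * cmod (1 - \<i> * of_real 0 * z)) (at_right 0)"
    by (intro tendsto_intros)
  hence "((\<lambda>e. A * cmod (1 - \<i> * of_real e * z)) \<longlongrightarrow> A) (at_right 0)" by simp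
  with main show ?thesis by (rule le_from_right[where c = 0])
qed


lemma uhp_bound:
  fixes H :: "complex \<Rightarrow> complex"
  assumes hol: "H holomorphic_on UNIV" and A: "A > 0" and M: "M > 0" and tau: "\<tau> \<ge> 0"
   and grow: "\<And>z. norm (H z) \<le> M * exp (\<tau> * norm z)"
   and re: "\<And>x. norm (H (of_real x)) \<le> A"
   and z: "Im z \<ge> 0"
  shows "norm (H z) \<le> A * exp (\<tau> * Im z)"
proof -
  define h where "h \<xi> = H \<xi> * exp (\<i> * of_real \<tau> * \<xi>)" for \<xi>
  have nexp: "norm (exp (\<i> * of_real \<tau> * \<xi>)) = exp (- \<tau> * Im \<xi>)" for \<xi>
    by (simp add: norm_exp_eq_Re)
  have nh: "norm (h \<xi>) = norm (H \<xi>) * exp (- \<tau> * Im \<xi>)" for \<xi>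
    unfolding h_def norm_mult nexp ..
  have holh: "h holomorphic_on UNIV" unfolding h_def
    by (intro holomorphic_intros holomorphic_on_subset[OF hol]) auto
  have growh: "norm (h \<xi>) \<le> M * exp ((2*\<tau>) * norm \<xi>)" for \<xi>
  proof -
    have "exp (- \<tau> * Im \<xi>) \<le> exp (\<tau> * norm \<xi>)"
    proof -
      have "- Im \<xi> \<le> norm \<xi>" using abs_Im_le_cmod[of \<xi>] by linarith
      hence "\<tau> * (- Im \<xi>) \<le> \<tau> * norm \<xi>" using tau by (rule mult_left_mono)
      thus ?thesis by simp
    qed
    hence "norm (h \<xi>) \<le> M * exp (\<tau> * norm \<xi>) * exp (\<tau> * norm \<xi>)" unfolding nh
      using grow[of \<xi>] M by (intro mult_mono) auto
    also have "\<dots> = M * exp ((2*\<tau>) * norm \<xi>)" by (simp add: mult.assoc exp_add[symmetric])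
    finally show ?thesis .
  qed
  define K where "K = max A M"
  have K: "K > 0" "A \<le> K" "M \<le> K" using A M unfolding K_def by auto
  have hre: "norm (h (of_real x)) \<le> K" for x
    using re[of x] K unfolding nh by simp
  have him: "norm (h (\<i> * of_real y)) \<le> K" if "y \<ge> 0" for y
  proof -
    have "norm (H (\<i> * of_real y)) \<le> M * exp (\<tau> * y)" using grow[of "\<i> * of_real y"] that
      by (simp add: norm_mult)
    hence "norm (h (\<i> * of_real y)) \<le> M * exp (\<tau> * y) * exp (- \<tau> * y)" unfolding nh by simp
    also have "\<dots> = M" by (simp add: mult.assoc exp_add[symmetric])
    finally show ?thesis using K by simp
  qed
  have bddh: "norm (h \<xi>) \<le> K" if "Im \<xi> \<ge> 0" for \<xi>
  proof (cases "Re \<xi> \<ge> 0")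
    case True
    show ?thesis
      by (rule quadrant_PL[OF holh K(1) M _ growh]) (use tau hre him True that in auto)
  next
    case False
    define k where "k \<zeta> = h (\<i> * \<zeta>)" for \<zeta>
    have holk: "k holomorphic_on UNIV" unfolding k_def
      by (intro holomorphic_on_compose_gen[OF _ holh, unfolded o_def] holomorphic_intros) auto
    have "norm (k (- \<i> * \<xi>)) \<le> K"
    proof (rule quadrant_PL[OF holk K(1) M])
      show "0 \<le> 2 * \<tau>" using tau by simp
      show "norm (k \<zeta>) \<le> M * exp (2 * \<tau> * norm \<zeta>)" for \<zeta>
        unfolding k_def using growh[of "\<i> * \<zeta>"] by (simp add: norm_mult)
      show "norm (k (of_real x)) \<le> K" if "x \<ge> 0" for x
        unfolding k_def using him[OF that] by simp
      show "norm (k (\<i> * of_real y)) \<le> K" if "y \<ge> 0" for y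
        unfolding k_def using hre[of "-y"] by simp
      show "0 \<le> Re (- \<i> * \<xi>)" "0 \<le> Im (- \<i> * \<xi>)" using False that by auto
    qed
    thus ?thesis unfolding k_def by simp
  qed
  have hreA: "norm (h (of_real x)) \<le> A" for x
    using re[of x] unfolding nh by simp
  have "norm (h z) \<le> A" by (rule halfplane_bdd[OF holh A K(1) bddh hreA z])
  hence "norm (H z) * exp (- \<tau> * Im z) \<le> A" unfolding nh .
  hence "norm (H z) \<le> A / exp (- \<tau> * Im z)" by (simp add: field_simps)
  thus ?thesis by (simp add: exp_minus field_simps)
qed


lemma poly_exp_bound:
  fixes \<delta> :: real assumes d: "\<delta> > 0"
  obtains C where "C \<ge> 1" "\<And>r. r \<ge> 0 \<Longrightarrow> (r + 1)^2 \<le> C * exp (\<delta> * r)"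
proof -
  have "((\<lambda>r. (r + 1)^2 / exp (\<delta> * r)) \<longlongrightarrow> 0) at_top" using d by real_asymp
  hence "\<forall>\<^sub>F r in at_top. (r + 1)^2 / exp (\<delta> * r) < 1" by (rule order_tendstoD(2)) simp
  then obtain R0 where R0: "\<And>r. r \<ge> R0 \<Longrightarrow> (r + 1)^2 / exp (\<delta> * r) < 1"
    by (auto simp: eventually_at_top_linorder)
  define C where "C = max 1 ((\<bar>R0\<bar> + 1)^2)"
  show ?thesis
  proof (rule that[of C])
    show "C \<ge> 1" unfolding C_def by simp
    fix r :: real assume r: "r \<ge> 0"
    show "(r + 1)^2 \<le> C * exp (\<delta> * r)"
    proof (cases "r \<ge> R0")
      case True
      hence "(r + 1)^2 < exp (\<delta> * r)" using R0[of r] by (simp add: field_simps)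
      also have "\<dots> \<le> C * exp (\<delta> * r)" unfolding C_def by simp
      finally show ?thesis by simp
    next
      case False
      hence "(r + 1)^2 \<le> (\<bar>R0\<bar> + 1)^2" using r by (intro power_mono) auto
      also have "\<dots> \<le> C" unfolding C_def by simp
      also have "\<dots> \<le> C * exp (\<delta> * r)"
      proof -
        have "1 \<le> exp (\<delta> * r)" using d r by simp
        moreover have "C \<ge> 0" unfolding C_def by simp
        ultimately show ?thesis using mult_left_mono[of 1 "exp (\<delta> * r)" C] by simp
      qed
      finally show ?thesis .
    qed
  qed
qed

lemma halfplane_f:
  fixes F :: "complex \<Rightarrow> complex"
  assumes hol: "F holomorphic_on UNIV" and A: "A > 0" and M: "M > 0"
   and t: "0 \<le> \<tau>0" "\<tau>0 < \<tau>"
   and grow: "\<And>z. norm (F z) \<le> M * exp (\<tau>0 * norm z)"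
   and re: "\<And>x::real. norm (F (of_real x)) \<le> A / (1 + x\<^sup>2)"
   and z: "Im z \<ge> 0"
  shows "norm (F z) \<le> A * exp (\<tau> * Im z) / (1 + (Re z)\<^sup>2)"
proof -
  have pos1: "0 < 1 + t^2" for t :: real by (metis add_pos_nonneg zero_less_one zero_le_power2)
  define H where "H \<xi> = (\<xi> + \<i>)^2 * F \<xi>" for \<xi>
  have n2: "norm ((\<xi> + \<i>)^2) = (Re \<xi>)^2 + (Im \<xi> + 1)^2" for \<xi>
    by (simp add: norm_power cmod_power2)
  obtain C where C: "C \<ge> 1" "\<And>r. r \<ge> 0 \<Longrightarrow> (r + 1)^2 \<le> C * exp ((\<tau> - \<tau>0) * r)"
    using poly_exp_bound[of "\<tau> - \<tau>0"] t by auto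
  have holH: "H holomorphic_on UNIV" unfolding H_def
    by (intro holomorphic_intros hol)
  have growH: "norm (H \<xi>) \<le> (C * M) * exp (\<tau> * norm \<xi>)" for \<xi>
  proof -
    have "norm ((\<xi> + \<i>)^2) \<le> (norm \<xi> + 1)^2"
    proof -
      have "norm (\<xi> + \<i>) \<le> norm \<xi> + 1" using norm_triangle_ineq[of \<xi> \<i>] by simp
      thus ?thesis unfolding norm_power by (rule power_mono) simp
    qed
    also have "\<dots> \<le> C * exp ((\<tau> - \<tau>0) * norm \<xi>)" by (rule C) simp
    finally have a: "norm ((\<xi> + \<i>)^2) \<le> C * exp ((\<tau> - \<tau>0) * norm \<xi>)" .
    have "norm (H \<xi>) \<le> C * exp ((\<tau> - \<tau>0) * norm \<xi>) * (M * exp (\<tau>0 * norm \<xi>))"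
      unfolding H_def norm_mult using a grow[of \<xi>] C by (intro mult_mono) auto
    also have "\<dots> = (C * M) * exp (((\<tau> - \<tau>0) * norm \<xi>) + \<tau>0 * norm \<xi>)"
      by (simp add: exp_add)
    also have "((\<tau> - \<tau>0) * norm \<xi>) + \<tau>0 * norm \<xi> = \<tau> * norm \<xi>" by (simp add: algebra_simps)
    finally show ?thesis .
  qed
  have reH: "norm (H (of_real x)) \<le> A" for x
  proof -
    have "norm (H (of_real x)) = (1 + x^2) * norm (F (of_real x))"
      unfolding H_def norm_mult n2 by simp
    also have "\<dots> \<le> (1 + x^2) * (A / (1 + x^2))" using re[of x] by (intro mult_left_mono) auto
    also have "\<dots> = A" using pos1[of x] by simp
    finally show ?thesis .
  qed
  have "norm (H z) \<le> A * exp (\<tau> * Im z)"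
    by (rule uhp_bound[OF holH A _ _ growH reH z]) (use C M t in auto)
  moreover have "norm (H z) = ((Re z)^2 + (Im z + 1)^2) * norm (F z)"
    unfolding H_def norm_mult n2 ..
  moreover have "1 + (Re z)^2 \<le> (Re z)^2 + (Im z + 1)^2"
  proof -
    have "1 \<le> (Im z + 1)^2" using z by (intro one_le_power) simp
    thus ?thesis by simp
  qed
  ultimately have "(1 + (Re z)^2) * norm (F z) \<le> A * exp (\<tau> * Im z)"
    using mult_right_mono[of "1 + (Re z)^2" "(Re z)^2 + (Im z + 1)^2" "norm (F z)"] by simp
  thus ?thesis using pos1[of "Re z"] by (simp add: pos_le_divide_eq mult.commute)
qed

theorem mainTheorem6:
  fixes f :: "complex \<Rightarrow> complex" and \<sigma> A :: real
  assumes "of_exponential_type f \<sigma>" and "\<sigma> > 0" and "A > 0"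
    and "\<And>x::real. norm (f (complex_of_real x)) \<le> A / (1 + x\<^sup>2)"
  shows "\<And>x y :: real. norm (f (Complex x y)) \<le> A * exp (\<sigma> * \<bar>y\<bar>) / (1 + x\<^sup>2)"
proof -
  fix x y :: real
  have hol: "f holomorphic_on UNIV" and ne: "exp_type_bounds f \<noteq> {}"
    and sig: "\<sigma> = Inf (exp_type_bounds f)"
    using assms(1) unfolding of_exponential_type_def exponential_type_def by auto
  have bnd: "norm (f (Complex x y)) \<le> A * exp (\<tau> * \<bar>y\<bar>) / (1 + x\<^sup>2)" if tau: "\<tau> > \<sigma>" for \<tau>
  proof -
    obtain \<tau>0 where t0: "\<tau>0 \<in> exp_type_bounds f" "\<tau>0 < \<tau>"
      using cInf_lessD[OF ne, of \<tau>] tau sig by auto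
    then obtain M where M: "M > 0" "\<And>z. norm (f z) \<le> M * exp (\<tau>0 * norm z)" "\<tau>0 > 0"
      unfolding exp_type_bounds_def by auto
    show ?thesis
    proof (cases "y \<ge> 0")
      case True
      have "norm (f (Complex x y)) \<le> A * exp (\<tau> * Im (Complex x y)) / (1 + (Re (Complex x y))\<^sup>2)"
        by (rule halfplane_f[OF hol assms(3) M(1) _ t0(2) M(2) assms(4)]) (use M True in auto)
      thus ?thesis using True by simp
    next
      case False
      define F where "F z = f (- z)" for z
      have holF: "F holomorphic_on UNIV" unfolding F_def
        by (intro holomorphic_on_compose_gen[OF _ hol, unfolded o_def] holomorphic_intros) auto
      have "norm (F (Complex (-x) (-y))) \<le> A * exp (\<tau> * Im (Complex (-x) (-y))) / (1 + (Re (Complex (-x) (-y)))\<^sup>2)"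
      proof (rule halfplane_f[OF holF assms(3) M(1) _ t0(2)])
        show "norm (F z) \<le> M * exp (\<tau>0 * norm z)" for z unfolding F_def using M(2)[of "-z"] by simp
        show "norm (F (of_real t)) \<le> A / (1 + t\<^sup>2)" for t unfolding F_def using assms(4)[of "-t"] by simp
      qed (use M False in auto)
      moreover have "- Complex (-x) (-y) = Complex x y" by (simp add: complex_eq_iff)
      ultimately show ?thesis using False by (simp add: F_def)
    qed
  qed
  have lim: "((\<lambda>\<tau>. A * exp (\<tau> * \<bar>y\<bar>) / (1 + x\<^sup>2)) \<longlongrightarrow> A * exp (\<sigma> * \<bar>y\<bar>) / (1 + x\<^sup>2)) (at_right \<sigma>)"
    using add_pos_nonneg[OF zero_less_one zero_le_power2[of x]] by (intro tendsto_intros) simp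
  show "norm (f (Complex x y)) \<le> A * exp (\<sigma> * \<bar>y\<bar>) / (1 + x\<^sup>2)"
    by (rule le_from_right[where c = \<sigma>, OF bnd lim])
qed

end
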